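(* Let $A$ be a hyperoperator on $\mathbb{R}^n$ on the complex Banach space $X$, let $f\in\mathcal{E}(\mathbb{R}^n,\mathbb{R}^m)$, and let $X'=\{x\in D_A: f(a)x=0\}$ and $Y=\overline{X'}$. Then $Y$ is an $a$-invariant closed subspace of $X$ (in particular $a_j$ maps $X'$ into $X'$ and $A(\phi)Y\subset Y$ for all $\phi\in\mathcal{D}(\mathbb{R}^n)$), and the restriction $a'=a|_Y$ is a hyperoperator, i.e. $A'(\phi):=A(\phi)|_Y$ defines a hyperoperator on $\mathbb{R}^n$ on the Banach space $Y$. Moreover $D_{A'}=X'$ and $$\operatorname{int}\{f=0\}\cap\sigma(A)\subset\sigma(A')\subset\{f=0\}\cap\sigma(A).$$ If $\{f=0\}$ contains an open subset of $\mathbb{R}^n$ that meets $\sigma(A)$, then $Y\neq\{0\}$.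
   Context: $X$ is a complex Banach space, $L(X)$ the bounded operators. $\mathcal{D}(\mathbb{R}^n)=C_c^\infty(\mathbb{R}^n)$ (complex-valued); $\mathcal{E}(\mathbb{R}^n,\mathbb{R}^m)$ the smooth maps $\mathbb{R}^n\to\mathbb{R}^m$. A hyperoperator on $\mathbb{R}^n$ on a Banach space $Z$ is a linear map $B:\mathcal{D}(\mathbb{R}^n)\to L(Z)$, continuous ($B(\phi_j)\to0$ in operator norm when $\phi_j\to0$ in $\mathcal{D}(\mathbb{R}^n)$), multiplicative ($B(\phi\psi)=B(\phi)B(\psi)$), with (i) $D_B:=\bigcup_\phi\operatorname{Im}B(\phi)$ dense in $Z$ and (ii) $\bigcap_\phi\operatorname{Ker}B(\phi)=\{0\}$. For smooth $g:\mathbb{R}^n\to\mathbb{R}^k$ and $x\in D_A$ written $x=A(\phi)y$, $g(a)x:=A(g\phi)y$ (well defined, componentwise); $a_j:=g_j(a)$ with $g_j(\xi)=\xi_j$. $\sigma(A)$ denotes the support of $A$ as an $L(X)$-valued distribution; $\{f=0\}=f^{-1}(0)$. *)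

theory Defs
  imports "HOL-Analysis.Analysis"
begin

text \<open>HOL has no type class of complex vector spaces.  A complex Banach space is
rendered as a real Banach space (type class banach) together with a complex scalar
multiplication smul extending the real one and compatible with the norm.\<close>

definition complex_banach :: "(complex \<Rightarrow> 'x::banach \<Rightarrow> 'x) \<Rightarrow> bool" where
  "complex_banach smul \<longleftrightarrow> vector_space smul
     \<and> (\<forall>(r::real) x. smul (complex_of_real r) x = r *\<^sub>R x)
     \<and> (\<forall>c x. norm (smul c x) = cmod c * norm x)"

definition csubspace :: "(complex \<Rightarrow> 'x::banach \<Rightarrow> 'x) \<Rightarrow> 'x set \<Rightarrow> bool" where
  "csubspace smul Z \<longleftrightarrow> 0 \<in> Z \<and> (\<forall>x\<in>Z. \<forall>y\<in>Z. x + y \<in> Z) \<and> (\<forall>c. \<forall>x\<in>Z. smul c x \<in> Z)"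

text \<open>Bounded complex-linear operators on a closed subspace Z (a Banach space in its own
right); operators are represented as functions on the ambient space, only their values
on Z matter.\<close>

definition bounded_op_on :: "(complex \<Rightarrow> 'x::banach \<Rightarrow> 'x) \<Rightarrow> 'x set \<Rightarrow> ('x \<Rightarrow> 'x) \<Rightarrow> bool" where
  "bounded_op_on smul Z T \<longleftrightarrow> T ` Z \<subseteq> Z
     \<and> (\<forall>x\<in>Z. \<forall>y\<in>Z. T (x + y) = T x + T y)
     \<and> (\<forall>c. \<forall>x\<in>Z. T (smul c x) = smul c (T x))
     \<and> (\<exists>K. \<forall>x\<in>Z. norm (T x) \<le> K * norm x)"

definition opnorm_on :: "'x set \<Rightarrow> ('x::real_normed_vector \<Rightarrow> 'x) \<Rightarrow> real" where
  "opnorm_on Z T = Sup ({norm (T x) | x. x \<in> Z \<and> norm x \<le> 1} \<union> {0})"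

definition dderiv :: "'a::real_normed_vector \<Rightarrow> ('a \<Rightarrow> 'b::real_normed_vector) \<Rightarrow> 'a \<Rightarrow> 'b" where
  "dderiv v f = (\<lambda>x. frechet_derivative f (at x) v)"

fun dderivs :: "'a::real_normed_vector list \<Rightarrow> ('a \<Rightarrow> 'b::real_normed_vector) \<Rightarrow> 'a \<Rightarrow> 'b" where
  "dderivs [] f = f"
| "dderivs (v # vs) f = dderiv v (dderivs vs f)"

definition smooth :: "('a::euclidean_space \<Rightarrow> 'b::real_normed_vector) \<Rightarrow> bool" where
  "smooth f \<longleftrightarrow> (\<forall>vs. set vs \<subseteq> Basis \<longrightarrow> (\<forall>x. dderivs vs f differentiable (at x)))"

definition tsupport :: "('a::topological_space \<Rightarrow> 'b::zero) \<Rightarrow> 'a set" where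
  "tsupport f = closure {x. f x \<noteq> 0}"

definition test_fun :: "('a::euclidean_space \<Rightarrow> complex) \<Rightarrow> bool" where
  "test_fun \<phi> \<longleftrightarrow> smooth \<phi> \<and> compact (tsupport \<phi>)"

definition D_tendsto_zero :: "(nat \<Rightarrow> 'a::euclidean_space \<Rightarrow> complex) \<Rightarrow> bool" where
  "D_tendsto_zero \<phi>s \<longleftrightarrow> (\<forall>j. test_fun (\<phi>s j))
     \<and> (\<exists>K. compact K \<and> (\<forall>j. tsupport (\<phi>s j) \<subseteq> K))
     \<and> (\<forall>vs. set vs \<subseteq> Basis \<longrightarrow>
          (\<forall>e>0. \<forall>\<^sub>F j in sequentially. \<forall>x. norm (dderivs vs (\<phi>s j) x) < e))"

definition hyperoperator ::
  "(complex \<Rightarrow> 'x::banach \<Rightarrow> 'x) \<Rightarrow> 'x set \<Rightarrow> (('a::euclidean_space \<Rightarrow> complex) \<Rightarrow> 'x \<Rightarrow> 'x) \<Rightarrow> bool" where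
  "hyperoperator smul Z B \<longleftrightarrow>
     csubspace smul Z \<and> closed Z
     \<and> (\<forall>\<phi>. test_fun \<phi> \<longrightarrow> bounded_op_on smul Z (B \<phi>))
     \<and> (\<forall>\<phi> \<psi>. test_fun \<phi> \<longrightarrow> test_fun \<psi> \<longrightarrow> (\<forall>x\<in>Z. B (\<lambda>t. \<phi> t + \<psi> t) x = B \<phi> x + B \<psi> x))
     \<and> (\<forall>\<phi> c. test_fun \<phi> \<longrightarrow> (\<forall>x\<in>Z. B (\<lambda>t. c * \<phi> t) x = smul c (B \<phi> x)))
     \<and> (\<forall>\<phi>s. D_tendsto_zero \<phi>s \<longrightarrow> (\<lambda>j. opnorm_on Z (B (\<phi>s j))) \<longlonglongrightarrow> 0)
     \<and> (\<forall>\<phi> \<psi>. test_fun \<phi> \<longrightarrow> test_fun \<psi> \<longrightarrow> (\<forall>x\<in>Z. B (\<lambda>t. \<phi> t * \<psi> t) x = B \<phi> (B \<psi> x)))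
     \<and> Z \<subseteq> closure (\<Union>\<phi>\<in>{\<phi>. test_fun \<phi>}. B \<phi> ` Z)
     \<and> (\<forall>x\<in>Z. (\<forall>\<phi>. test_fun \<phi> \<longrightarrow> B \<phi> x = 0) \<longrightarrow> x = 0)"

definition hdom :: "'x set \<Rightarrow> (('a::euclidean_space \<Rightarrow> complex) \<Rightarrow> 'x \<Rightarrow> 'x) \<Rightarrow> 'x set" where
  "hdom Z B = (\<Union>\<phi>\<in>{\<phi>. test_fun \<phi>}. B \<phi> ` Z)"

definition hsupport :: "'x::zero set \<Rightarrow> (('a::euclidean_space \<Rightarrow> complex) \<Rightarrow> 'x \<Rightarrow> 'x) \<Rightarrow> 'a set" where
  "hsupport Z B = {t. \<not> (\<exists>U. open U \<and> t \<in> U \<and>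
       (\<forall>\<phi>. test_fun \<phi> \<and> tsupport \<phi> \<subseteq> U \<longrightarrow> (\<forall>x\<in>Z. B \<phi> x = 0)))}"

text \<open>Functional calculus g(a) for a real smooth g: for x = B(phi) y,
g(a) x = B(g phi) y (well defined on D_B).\<close>

definition hcalc :: "'x set \<Rightarrow> (('a::euclidean_space \<Rightarrow> complex) \<Rightarrow> 'x \<Rightarrow> 'x) \<Rightarrow> ('a \<Rightarrow> real) \<Rightarrow> 'x \<Rightarrow> 'x" where
  "hcalc Z B g x = (SOME v. \<exists>\<phi> y. test_fun \<phi> \<and> y \<in> Z \<and> x = B \<phi> y
                      \<and> v = B (\<lambda>t. complex_of_real (g t) * \<phi> t) y)"

end

theory Submission
  imports Defs
begin


definition sm :: "nat \<Rightarrow> ('a::euclidean_space \<Rightarrow> 'b::real_normed_vector) \<Rightarrow> bool" where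
  "sm N f \<longleftrightarrow> (\<forall>vs. length vs \<le> N \<longrightarrow> set vs \<subseteq> Basis \<longrightarrow> (\<forall>x. dderivs vs f differentiable (at x)))"

lemma dderivs_append: "dderivs (vs @ ws) f = dderivs vs (dderivs ws f)"
  by (induction vs) auto

lemma smooth_sm: "smooth f \<longleftrightarrow> (\<forall>N. sm N f)"
  unfolding smooth_def sm_def by auto

lemma sm_0: "sm 0 f \<longleftrightarrow> (\<forall>x. f differentiable (at x))"
  unfolding sm_def by auto

lemma sm_Suc: "sm (Suc N) f \<longleftrightarrow> (\<forall>x. f differentiable (at x)) \<and> (\<forall>v\<in>Basis. sm N (dderiv v f))"
proof
  assume a: "sm (Suc N) f"
  have "\<forall>x. f differentiable (at x)" using a[unfolded sm_def, rule_format, of "[]"] by auto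
  moreover have "sm N (dderiv v f)" if "v \<in> Basis" for v
    unfolding sm_def
  proof (intro allI impI)
    fix vs :: "'a list" and x assume "length vs \<le> N" "set vs \<subseteq> Basis"
    then show "dderivs vs (dderiv v f) differentiable (at x)"
      using a[unfolded sm_def, rule_format, of "vs @ [v]"] that by (auto simp: dderivs_append)
  qed
  ultimately show "(\<forall>x. f differentiable (at x)) \<and> (\<forall>v\<in>Basis. sm N (dderiv v f))" by blast
next
  assume a: "(\<forall>x. f differentiable (at x)) \<and> (\<forall>v\<in>Basis. sm N (dderiv v f))"
  show "sm (Suc N) f" unfolding sm_def
  proof (intro allI impI)
    fix vs :: "'a list" and x assume l: "length vs \<le> Suc N" "set vs \<subseteq> Basis"
    show "dderivs vs f differentiable (at x)"
    proof (cases vs rule: rev_exhaust)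
      case Nil then show ?thesis using a by simp
    next
      case (snoc ws v)
      then have "dderivs vs f = dderivs ws (dderiv v f)" by (simp add: dderivs_append)
      moreover have "sm N (dderiv v f)" using a l snoc by auto
      ultimately show ?thesis using l snoc unfolding sm_def by auto
    qed
  qed
qed

lemma sm_mono: "sm N f \<Longrightarrow> M \<le> N \<Longrightarrow> sm M f"
  unfolding sm_def by auto

lemma sm_diff: "sm N f \<Longrightarrow> f differentiable (at x)"
  unfolding sm_def by (metis empty_subsetI le0 list.size(3) dderivs.simps(1) empty_set)

lemma dderiv_at: "(f has_derivative f') (at x) \<Longrightarrow> dderiv v f x = f' v"
  unfolding dderiv_def using frechet_derivative_at by metis

lemma sm_const: "sm N (\<lambda>x. c)"
proof (induction N arbitrary: c)
  case 0 then show ?case by (simp add: sm_0)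
next
  case (Suc N)
  have "dderiv v (\<lambda>x. c) = (\<lambda>x. 0)" for v :: 'a
    by (rule ext, rule dderiv_at, simp)
  then show ?case using Suc by (simp add: sm_Suc)
qed

lemma sm_linear: "bounded_linear L \<Longrightarrow> sm N L"
proof (cases N)
  case 0 assume "bounded_linear L" then show ?thesis using 0
    by (simp add: sm_0 bounded_linear_imp_differentiable)
next
  case (Suc M) assume L: "bounded_linear L"
  have "dderiv v L = (\<lambda>x. L v)" for v
    by (rule ext, rule dderiv_at, rule bounded_linear_imp_has_derivative[OF L])
  then show ?thesis using Suc L by (simp add: sm_Suc sm_const bounded_linear_imp_differentiable)
qed

lemma sm_add: "sm N f \<Longrightarrow> sm N g \<Longrightarrow> sm N (\<lambda>x. f x + g x)"
proof (induction N arbitrary: f g)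
  case 0 then show ?case by (simp add: sm_0 differentiable_add)
next
  case (Suc N)
  have d: "dderiv v (\<lambda>x. f x + g x) = (\<lambda>x. dderiv v f x + dderiv v g x)" for v
  proof (rule ext)
    fix x
    have "f differentiable (at x)" "g differentiable (at x)" using Suc.prems sm_diff by blast+
    then show "dderiv v (\<lambda>x. f x + g x) x = dderiv v f x + dderiv v g x"
      unfolding dderiv_def
      by (metis (no_types) frechet_derivative_at frechet_derivative_works has_derivative_add)
  qed
  show ?case using Suc by (simp add: sm_Suc d differentiable_add)
qed

lemma sm_blin: "bounded_linear L \<Longrightarrow> sm N f \<Longrightarrow> sm N (\<lambda>x. L (f x))"
proof (induction N arbitrary: f)
  case 0 then show ?case
    by (auto simp: sm_0 differentiable_def intro: bounded_linear.has_derivative)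
next
  case (Suc N)
  have d: "dderiv v (\<lambda>x. L (f x)) = (\<lambda>x. L (dderiv v f x))" for v
  proof (rule ext)
    fix x
    have "f differentiable (at x)" using Suc.prems sm_diff by blast
    then show "dderiv v (\<lambda>x. L (f x)) x = L (dderiv v f x)"
      unfolding dderiv_def using bounded_linear.has_derivative[OF Suc.prems(1)]
      by (metis frechet_derivative_at frechet_derivative_works)
  qed
  have "(\<lambda>x. L (f x)) differentiable (at x)" for x
    using Suc.prems sm_diff bounded_linear.has_derivative[OF Suc.prems(1)]
    unfolding differentiable_def by blast
  then show ?case using Suc unfolding sm_Suc d by auto
qed

lemma sm_mult: "sm N f \<Longrightarrow> sm N g \<Longrightarrow> sm N (\<lambda>x. f x * g x :: 'b::real_normed_algebra)"
proof (induction N arbitrary: f g)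
  case 0 then show ?case unfolding sm_0 using differentiable_mult by blast
next
  case (Suc N)
  have d: "dderiv v (\<lambda>x. f x * g x) = (\<lambda>x. f x * dderiv v g x + dderiv v f x * g x)" for v
  proof (rule ext)
    fix x
    have "f differentiable (at x)" "g differentiable (at x)" using Suc.prems sm_diff by blast+
    then have "((\<lambda>x. f x * g x) has_derivative (\<lambda>h. f x * frechet_derivative g (at x) h + frechet_derivative f (at x) h * g x)) (at x)"
      by (intro has_derivative_mult) (simp_all add: frechet_derivative_works)
    then show "dderiv v (\<lambda>x. f x * g x) x = f x * dderiv v g x + dderiv v f x * g x"
      unfolding dderiv_def by (simp add: dderiv_at[unfolded dderiv_def])
  qed
  have fN: "sm N f" "sm N g" using Suc.prems sm_mono by (metis le_SucI order_refl)+
  have "sm N (dderiv v f)" "sm N (dderiv v g)" if "v \<in> Basis" for v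
    using Suc.prems that by (auto simp: sm_Suc)
  then have "\<forall>v\<in>Basis. sm N (dderiv v (\<lambda>x. f x * g x))"
    unfolding d by (intro ballI sm_add Suc.IH fN) auto
  moreover have "\<forall>x. (\<lambda>x. f x * g x) differentiable (at x)"
    using Suc.prems sm_diff differentiable_mult by blast
  ultimately show ?case unfolding sm_Suc by blast
qed


lemma sm_uminus: "sm N f \<Longrightarrow> sm N (\<lambda>x. - f x)"
  using sm_blin[OF bounded_linear_minus[OF bounded_linear_ident]] by blast

lemma sm_diff': "sm N f \<Longrightarrow> sm N g \<Longrightarrow> sm N (\<lambda>x. f x - g x)"
  using sm_add[OF _ sm_uminus, of N f g] by simp

lemma sm_comp:
  fixes H :: "real \<Rightarrow> real" and F :: "'a::euclidean_space \<Rightarrow> real"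
  shows "sm N H \<Longrightarrow> sm N F \<Longrightarrow> sm N (\<lambda>x. H (F x))"
proof (induction N arbitrary: H)
  case 0
  have "(\<lambda>x. H (F x)) differentiable (at x)" for x
  proof -
    have "F differentiable (at x)" "H differentiable (at (F x))" using sm_diff[OF 0(2)] sm_diff[OF 0(1)] by auto
    then obtain D D' where "(F has_derivative D) (at x)" "(H has_derivative D') (at (F x))"
      unfolding differentiable_def by blast
    then show ?thesis unfolding differentiable_def
      by (intro exI) (rule has_derivative_compose)
  qed
  then show ?case by (simp add: sm_0)
next
  case (Suc N)
  have d: "dderiv v (\<lambda>x. H (F x)) = (\<lambda>x. dderiv 1 H (F x) * dderiv v F x)" for v
  proof (rule ext)
    fix x
    have "F differentiable (at x)" "H differentiable (at (F x))" using sm_diff[OF Suc.prems(2)] sm_diff[OF Suc.prems(1)] by auto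
    then have hd: "((\<lambda>x. H (F x)) has_derivative (\<lambda>y. frechet_derivative H (at (F x)) (frechet_derivative F (at x) y))) (at x)"
      using has_derivative_compose[of F "frechet_derivative F (at x)" x UNIV H "frechet_derivative H (at (F x))"]
      unfolding frechet_derivative_works by blast
    have lin: "linear (frechet_derivative H (at (F x)))"
      using \<open>H differentiable (at (F x))\<close> by (rule linear_frechet_derivative)
    have e1: "dderiv v (\<lambda>x. H (F x)) x = frechet_derivative H (at (F x)) (frechet_derivative F (at x) v)"
      using dderiv_at[OF hd, of v] .
    have e2: "frechet_derivative H (at (F x)) (frechet_derivative F (at x) v * 1) = frechet_derivative F (at x) v * frechet_derivative H (at (F x)) 1"
      by (rule linear_scale_real[OF lin])
    have e3: "frechet_derivative H (at (F x)) (frechet_derivative F (at x) v) = frechet_derivative F (at x) v * frechet_derivative H (at (F x)) 1"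
      using e2 by simp
    show "dderiv v (\<lambda>x. H (F x)) x = dderiv 1 H (F x) * dderiv v F x"
      unfolding e1 e3 unfolding dderiv_def by (rule mult.commute)
  qed
  have FN: "sm N F" using sm_mono[OF Suc.prems(2)] by simp
  have HN: "sm N H" using sm_mono[OF Suc.prems(1)] by simp
  have H1: "sm N (dderiv 1 H)" using Suc.prems(1) unfolding sm_Suc by auto
  have "\<forall>v\<in>Basis. sm N (dderiv v (\<lambda>x. H (F x)))"
  proof
    fix v :: 'a assume "v \<in> Basis"
    then have "sm N (dderiv v F)" using Suc.prems(2) unfolding sm_Suc by auto
    then show "sm N (dderiv v (\<lambda>x. H (F x)))" unfolding d by (rule sm_mult[OF Suc.IH[OF H1 FN]])
  qed
  moreover have "\<forall>x. (\<lambda>x. H (F x)) differentiable (at x)"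
  proof
    fix x
    from sm_diff[OF Suc.IH[OF HN FN]] show "(\<lambda>x. H (F x)) differentiable (at x)" .
  qed
  ultimately show ?case unfolding sm_Suc by blast
qed

lemma sm_inverse:
  fixes F :: "'a::euclidean_space \<Rightarrow> real"
  shows "sm N F \<Longrightarrow> (\<forall>x. F x \<noteq> 0) \<Longrightarrow> sm N (\<lambda>x. inverse (F x))"
proof (induction N)
  case 0
  have "(\<lambda>x. inverse (F x)) differentiable (at x)" for x
  proof -
    have "(F has_derivative frechet_derivative F (at x)) (at x)"
      using sm_diff[OF 0(1)] unfolding frechet_derivative_works by auto
    from Deriv.has_derivative_inverse[OF _ this] 0(2) show ?thesis unfolding differentiable_def by blast
  qed
  then show ?case by (simp add: sm_0)
next
  case (Suc N)
  have d: "dderiv v (\<lambda>x. inverse (F x)) = (\<lambda>x. - (inverse (F x) * dderiv v F x * inverse (F x)))" for v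
  proof (rule ext)
    fix x
    have "(F has_derivative frechet_derivative F (at x)) (at x)"
      using sm_diff[OF Suc.prems(1)] unfolding frechet_derivative_works by auto
    from Deriv.has_derivative_inverse[OF _ this] Suc.prems(2)
    have hd: "((\<lambda>x. inverse (F x)) has_derivative (\<lambda>h. - (inverse (F x) * frechet_derivative F (at x) h * inverse (F x)))) (at x)"
      by blast
    show "dderiv v (\<lambda>x. inverse (F x)) x = - (inverse (F x) * dderiv v F x * inverse (F x))"
      unfolding dderiv_at[OF hd, of v] unfolding dderiv_def by (rule refl)
  qed
  have FN: "sm N F" using sm_mono[OF Suc.prems(1)] by simp
  have I: "sm N (\<lambda>x. inverse (F x))" using Suc.IH[OF FN Suc.prems(2)] .
  have "\<forall>v\<in>Basis. sm N (dderiv v (\<lambda>x. inverse (F x)))"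
  proof
    fix v :: 'a assume "v \<in> Basis"
    then have "sm N (dderiv v F)" using Suc.prems(1) unfolding sm_Suc by auto
    then show "sm N (dderiv v (\<lambda>x. inverse (F x)))"
      unfolding d by (intro sm_uminus sm_mult I)
  qed
  moreover have "\<forall>x. (\<lambda>x. inverse (F x)) differentiable (at x)"
    using sm_diff[OF I] by blast
  ultimately show ?case unfolding sm_Suc by blast
qed

lemma sm_sum: "finite I \<Longrightarrow> (\<And>i. i \<in> I \<Longrightarrow> sm N (f i)) \<Longrightarrow> sm N (\<lambda>x. \<Sum>i\<in>I. f i x)"
proof (induction I rule: finite_induct)
  case empty then show ?case using sm_const[of N 0] by simp
next
  case (insert a I)
  have "sm N (\<lambda>x. f a x + (\<Sum>i\<in>I. f i x))"
    by (rule sm_add) (use insert in auto)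
  then show ?case using insert(1,2) by simp
qed


definition gk :: "nat \<Rightarrow> real \<Rightarrow> real" where
  "gk k s = (if s > 0 then inverse s ^ k * exp (- inverse s) else 0)"

lemma gk_deriv: "(gk k has_real_derivative (gk (Suc (Suc k)) s - real k * gk (Suc k) s)) (at s)"
proof (cases "s > 0")
  case True
  have "((\<lambda>s. inverse s ^ k * exp (- inverse s)) has_real_derivative
     (gk (Suc (Suc k)) s - real k * gk (Suc k) s)) (at s)"
  proof -
    have "((\<lambda>s. inverse s ^ k * exp (- inverse s)) has_real_derivative
      (real k * inverse s ^ (k - 1) * (- (inverse s ^ 2)) * exp (- inverse s)
        + inverse s ^ k * (exp (- inverse s) * inverse s ^ 2))) (at s)"
      using True
      by (auto intro!: derivative_eq_intros simp: power2_eq_square)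
    moreover have "real k * inverse s ^ (k - 1) * (- (inverse s ^ 2)) * exp (- inverse s)
        + inverse s ^ k * (exp (- inverse s) * inverse s ^ 2) = gk (Suc (Suc k)) s - real k * gk (Suc k) s"
    proof (cases k)
      case 0 then show ?thesis using True by (simp add: gk_def power2_eq_square)
    next
      case (Suc j) then show ?thesis using True by (simp add: gk_def power2_eq_square algebra_simps)
    qed
    ultimately show ?thesis by simp
  qed
  then show ?thesis
    by (rule has_field_derivative_transform_within_open[where S="{0<..}"]) (use True in \<open>auto simp: gk_def\<close>)
next
  case False
  show ?thesis
  proof (cases "s < 0")
    case True
    have z: "((\<lambda>s. 0) has_real_derivative 0) (at s)" by simp
    have e: "gk (Suc (Suc k)) s - real k * gk (Suc k) s = 0" using True by (simp add: gk_def)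
    show ?thesis unfolding e
      by (rule has_field_derivative_transform_within_open[OF z, where S="{..<0}"]) (use True in \<open>auto simp: gk_def\<close>)
  next
    case False
    with \<open>\<not> s > 0\<close> have s0: "s = 0" by simp
    have "((\<lambda>y. (gk k y - gk k 0) / (y - 0)) \<longlongrightarrow> 0) (at 0)"
      unfolding filterlim_at_split
    proof
      show "((\<lambda>y. (gk k y - gk k 0) / (y - 0)) \<longlongrightarrow> 0) (at_left 0)"
      proof (rule tendsto_eventually)
        show "\<forall>\<^sub>F y in at_left 0. (gk k y - gk k 0) / (y - 0) = (0::real)"
          using eventually_at_left_real[of "-1" "0::real", OF neg_less_0_iff_less[THEN iffD2, OF zero_less_one]]
          by eventually_elim (simp add: gk_def)
      qed
    next
      have lim: "((\<lambda>y. inverse y ^ Suc k / exp (inverse y)) \<longlongrightarrow> 0) (at_right (0::real))"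
        using filterlim_compose[OF tendsto_power_div_exp_0[of "Suc k"] filterlim_inverse_at_top_right] unfolding o_def .
      show "((\<lambda>y. (gk k y - gk k 0) / (y - 0)) \<longlongrightarrow> 0) (at_right 0)"
      proof (rule Lim_transform_eventually[OF lim])
        show "\<forall>\<^sub>F y in at_right 0. inverse y ^ Suc k / exp (inverse y) = (gk k y - gk k 0) / (y - 0)"
          using eventually_at_right_less[of "0::real"]
          by eventually_elim (simp add: gk_def exp_minus field_simps)
      qed
    qed
    then have "(gk k has_real_derivative 0) (at 0)"
      by (simp add: has_field_derivative_iff)
    then show ?thesis using s0 by (simp add: gk_def)
  qed
qed

lemma dderiv_real: "(f has_real_derivative D) (at s) \<Longrightarrow> dderiv 1 f s = D"
  using dderiv_at[of f "(*) D" s 1] by (simp add: has_field_derivative_def)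

lemma sm_gk: "sm N (gk k)"
proof (induction N arbitrary: k)
  case 0
  show ?case unfolding sm_0 using gk_deriv real_differentiable_def by blast
next
  case (Suc N)
  have d: "dderiv 1 (gk k) = (\<lambda>s. gk (Suc (Suc k)) s - real k * gk (Suc k) s)"
    by (rule ext, rule dderiv_real, rule gk_deriv)
  have "sm N (dderiv 1 (gk k))"
    unfolding d by (intro sm_diff' sm_mult sm_const Suc.IH)
  moreover have "\<forall>x. gk k differentiable (at x)"
    using gk_deriv real_differentiable_def by blast
  ultimately show ?case unfolding sm_Suc by simp
qed


definition hh :: "real \<Rightarrow> real" where "hh = gk 0"

lemma hh_pos: "s > 0 \<Longrightarrow> hh s > 0"
  unfolding hh_def gk_def by simp
lemma hh_zero: "s \<le> 0 \<Longrightarrow> hh s = 0"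
  unfolding hh_def gk_def by simp
lemma hh_nonneg: "hh s \<ge> 0"
  unfolding hh_def gk_def by simp
lemma hh_sm: "sm N hh"
  unfolding hh_def by (rule sm_gk)

lemma hh_eq0_iff: "hh s = 0 \<longleftrightarrow> s \<le> 0"
  using hh_pos[of s] hh_zero[of s] by (cases "s > 0") auto

lemma sm_comp_real: "sm N (H::real\<Rightarrow>real) \<Longrightarrow> sm N (\<lambda>s::real. H (a - s))"
proof -
  assume H: "sm N H"
  have "sm N (\<lambda>s::real. a - s)" using sm_diff'[OF sm_const sm_linear[OF bounded_linear_ident]] .
  from sm_comp[OF H this] show ?thesis .
qed

lemma sm_normsq: "sm N (\<lambda>t::'a::euclidean_space. (t - x) \<bullet> (t - x))"
proof -
  have e: "(\<lambda>t. (t - x) \<bullet> (t - x)) = (\<lambda>t. \<Sum>i\<in>Basis. (t \<bullet> i - x \<bullet> i) * (t \<bullet> i - x \<bullet> i))"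
    by (rule ext, subst euclidean_inner) (simp add: inner_diff_left)
  show ?thesis unfolding e
    by (intro sm_sum finite_Basis sm_mult sm_diff' sm_const sm_linear bounded_linear_inner_left)
qed

lemma sm_cont: "sm N f \<Longrightarrow> continuous_on S f"
  using sm_diff[of N f] by (intro continuous_at_imp_continuous_on ballI differentiable_imp_continuous_within) blast

lemma bump_exists:
  fixes K U :: "'a::euclidean_space set"
  assumes K: "compact K" and U: "open U" and KU: "K \<subseteq> U"
  shows "\<exists>\<psi>::'a \<Rightarrow> real. smooth \<psi> \<and> compact (tsupport \<psi>) \<and> tsupport \<psi> \<subseteq> U \<and> (\<forall>t\<in>K. \<psi> t = 1)"
proof (cases "K = {}")
  case True
  have "tsupport (\<lambda>t::'a. 0::real) = {}" by (simp add: tsupport_def)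
  then show ?thesis using True by (intro exI[of _ "\<lambda>t. 0"]) (simp add: smooth_sm sm_const)
next
  case Kne: False
  have "\<forall>x\<in>K. \<exists>r>0. cball x r \<subseteq> U" using U KU open_contains_cball by blast
  then obtain r where r: "\<And>x. x \<in> K \<Longrightarrow> r x > 0 \<and> cball x (r x) \<subseteq> U" by metis
  have "K \<subseteq> (\<Union>x\<in>K. ball x (r x))" using r by force
  then obtain F where F: "F \<subseteq> K" "finite F" "K \<subseteq> (\<Union>x\<in>F. ball x (r x))"
    using compactE_image[OF K, of K "\<lambda>x. ball x (r x)"] by blast
  define b where "b x t = hh (r x ^ 2 - (t - x) \<bullet> (t - x))" for x t
  define S where "S t = (\<Sum>x\<in>F. b x t)" for t
  have b_sm: "sm N (b x)" for N x
    unfolding b_def by (rule sm_comp[OF hh_sm], intro sm_diff' sm_const sm_normsq)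
  have S_sm: "sm N S" for N unfolding S_def by (intro sm_sum F b_sm)
  have b_nonneg: "b x t \<ge> 0" for x t by (simp add: b_def hh_nonneg)
  have b_pos: "b x t > 0" if "x \<in> F" "t \<in> ball x (r x)" for x t
  proof -
    have "r x > 0" using r F that by blast
    have "(t - x) \<bullet> (t - x) = dist t x ^ 2" by (simp add: dist_norm power2_norm_eq_inner)
    also have "\<dots> < r x ^ 2" using that \<open>r x > 0\<close> by (simp add: dist_commute power_strict_mono)
    finally show ?thesis unfolding b_def by (intro hh_pos) simp
  qed
  have b_nz: "t \<in> cball x (r x)" if "b x t \<noteq> 0" "x \<in> F" for x t
  proof (rule ccontr)
    assume "t \<notin> cball x (r x)"
    then have "dist x t > r x" by simp
    moreover have "r x > 0" using r F that by blast
    ultimately have "r x ^ 2 < dist t x ^ 2" by (simp add: dist_commute power_strict_mono)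
    moreover have "(t - x) \<bullet> (t - x) = dist t x ^ 2" by (simp add: dist_norm power2_norm_eq_inner)
    ultimately have "b x t = 0" unfolding b_def by (intro hh_zero) simp
    then show False using that by simp
  qed
  have S_pos: "S t > 0" if tK: "t \<in> K" for t
  proof -
    obtain x where x: "x \<in> F" "t \<in> ball x (r x)" using F(3) tK by blast
    have "b x t \<le> S t" unfolding S_def
      by (rule member_le_sum) (use x F b_nonneg in auto)
    then show ?thesis using b_pos[OF x] by simp
  qed
  obtain t0 where t0: "t0 \<in> K" "\<forall>t\<in>K. S t0 \<le> S t"
    using continuous_attains_inf[OF K Kne sm_cont[OF S_sm[of 0]]] by blast
  define m where "m = S t0"
  have m: "m > 0" "\<And>t. t \<in> K \<Longrightarrow> m \<le> S t" using S_pos t0 unfolding m_def by auto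
  define T where "T s = hh s * inverse (hh s + hh (m - s))" for s
  have den: "hh s + hh (m - s) \<noteq> 0" for s
  proof (cases "s > 0")
    case True then show ?thesis using hh_pos[of s] hh_nonneg[of "m - s"] by simp
  next
    case False then show ?thesis using hh_pos[of "m - s"] hh_nonneg[of s] m(1) by simp
  qed
  have T_sm: "sm N T" for N
    unfolding T_def by (intro sm_mult hh_sm sm_inverse sm_add sm_comp_real[OF hh_sm] den allI)
  define \<psi> where "\<psi> t = T (S t)" for t
  have \<psi>_sm: "smooth \<psi>" unfolding smooth_sm \<psi>_def using sm_comp[OF T_sm S_sm] by blast
  have \<psi>1: "\<psi> t = 1" if "t \<in> K" for t
  proof -
    have "hh (m - S t) = 0" using m(2)[OF that] by (intro hh_zero) simp
    moreover have "hh (S t) > 0" using S_pos[OF that] hh_pos by blast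
    ultimately show ?thesis by (simp add: \<psi>_def T_def)
  qed
  define C where "C = (\<Union>x\<in>F. cball x (r x))"
  have C: "compact C" "closed C" "C \<subseteq> U"
    using F r unfolding C_def by (auto intro!: compact_UN closed_UN)
  have "{t. \<psi> t \<noteq> 0} \<subseteq> C"
  proof
    fix t assume "t \<in> {t. \<psi> t \<noteq> 0}"
    then have "hh (S t) \<noteq> 0" by (simp add: \<psi>_def T_def)
    then have "S t \<noteq> 0" using hh_zero by force
    then obtain x where "x \<in> F" "b x t \<noteq> 0" unfolding S_def by (meson sum.neutral)
    then show "t \<in> C" unfolding C_def using b_nz by blast
  qed
  then have ts: "tsupport \<psi> \<subseteq> C" unfolding tsupport_def using C(2) closure_minimal by blast
  have "compact (tsupport \<psi>)"
    using compact_Int_closed[OF C(1), of "tsupport \<psi>"] ts by (simp add: tsupport_def Int_absorb1)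
  then show ?thesis using \<psi>_sm ts C(3) \<psi>1 by blast
qed



lemma smooth_mult: "smooth f \<Longrightarrow> smooth g \<Longrightarrow> smooth (\<lambda>x. f x * g x :: 'b::real_normed_algebra)"
  unfolding smooth_sm using sm_mult by blast

lemma smooth_of_real: "smooth (g::'a::euclidean_space \<Rightarrow> real) \<Longrightarrow> smooth (\<lambda>t. complex_of_real (g t))"
  unfolding smooth_sm using sm_blin[OF bounded_linear_of_real] by blast

lemma smooth_component: "smooth (f::'a::euclidean_space \<Rightarrow> real^'m) \<Longrightarrow> smooth (\<lambda>t. f t $ i)"
  unfolding smooth_sm using sm_blin[OF bounded_linear_vec_nth] by blast

lemma smooth_coord: "smooth (\<lambda>t::real^'n. t $ j)"
  unfolding smooth_sm using sm_linear[OF bounded_linear_vec_nth] by blast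

lemma test_fun_tsupport: "test_fun \<phi> \<Longrightarrow> compact (tsupport \<phi>)"
  by (simp add: test_fun_def)

lemma tsupport_closed: "closed (tsupport f)"
  by (simp add: tsupport_def)

lemma tsupport_in: "f t \<noteq> 0 \<Longrightarrow> t \<in> tsupport f"
  unfolding tsupport_def by (rule closure_subset[THEN subsetD]) simp

lemma test_fun_smooth: "test_fun \<phi> \<Longrightarrow> smooth \<phi>"
  by (simp add: test_fun_def)

lemma test_fun_mult: "test_fun \<phi> \<Longrightarrow> smooth g \<Longrightarrow> test_fun (\<lambda>t. g t * \<phi> t)"
proof -
  assume p: "test_fun \<phi>" and g: "smooth g"
  have sm: "smooth (\<lambda>t. g t * \<phi> t)" using smooth_mult[OF g test_fun_smooth[OF p]] .
  have "{t. g t * \<phi> t \<noteq> 0} \<subseteq> {t. \<phi> t \<noteq> 0}" by auto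
  then have s: "tsupport (\<lambda>t. g t * \<phi> t) \<subseteq> tsupport \<phi>" unfolding tsupport_def by (rule closure_mono)
  have "compact (tsupport \<phi> \<inter> tsupport (\<lambda>t. g t * \<phi> t))"
    using compact_Int_closed[OF test_fun_tsupport[OF p] tsupport_closed] .
  then have "compact (tsupport (\<lambda>t. g t * \<phi> t))" using s by (simp add: Int_absorb1)
  then show ?thesis using sm unfolding test_fun_def by blast
qed

lemma test_fun_mult2: "test_fun \<phi> \<Longrightarrow> smooth g \<Longrightarrow> test_fun (\<lambda>t. \<phi> t * g t)"
proof -
  have "(\<lambda>t. \<phi> t * g t) = (\<lambda>t. g t * \<phi> t)" by (rule ext) (rule mult.commute)
  then show "test_fun \<phi> \<Longrightarrow> smooth g \<Longrightarrow> test_fun (\<lambda>t. \<phi> t * g t)" using test_fun_mult[of \<phi> g] by simp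
qed

lemma cbump:
  fixes K U :: "'a::euclidean_space set"
  assumes "compact K" "open U" "K \<subseteq> U"
  shows "\<exists>\<psi>. test_fun \<psi> \<and> tsupport \<psi> \<subseteq> U \<and> (\<forall>t\<in>K. \<psi> t = 1)"
proof -
  obtain \<psi> :: "'a \<Rightarrow> real" where p: "smooth \<psi>" "compact (tsupport \<psi>)" "tsupport \<psi> \<subseteq> U" "\<forall>t\<in>K. \<psi> t = 1"
    using bump_exists[OF assms] by blast
  have e: "tsupport (\<lambda>t. complex_of_real (\<psi> t)) = tsupport \<psi>" by (simp add: tsupport_def)
  have "test_fun (\<lambda>t. complex_of_real (\<psi> t))"
    unfolding test_fun_def e using p(2) smooth_of_real[OF p(1)] by blast
  moreover have "tsupport (\<lambda>t. complex_of_real (\<psi> t)) \<subseteq> U" unfolding e by (rule p(3))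
  moreover have "\<forall>t\<in>K. complex_of_real (\<psi> t) = 1" using p(4) by simp
  ultimately show ?thesis by blast
qed

lemma bump_mult: fixes \<phi> \<psi> :: "'a::euclidean_space \<Rightarrow> complex" shows "(\<forall>t\<in>tsupport \<phi>. \<psi> t = 1) \<Longrightarrow> (\<lambda>t. \<psi> t * \<phi> t) = \<phi>"
proof (rule ext)
  fix t assume a: "\<forall>t\<in>tsupport \<phi>. \<psi> t = 1"
  show "\<psi> t * \<phi> t = \<phi> t"
  proof (cases "\<phi> t = 0")
    case False then show ?thesis using a tsupport_in[of \<phi> t] by simp
  qed simp
qed

lemma test_fun_zero: "test_fun (\<lambda>t::'a::euclidean_space. 0::complex)"
proof -
  have "tsupport (\<lambda>t::'a. 0::complex) = {}" by (simp add: tsupport_def)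
  moreover have "smooth (\<lambda>t::'a. 0::complex)" unfolding smooth_sm using sm_const by blast
  ultimately show ?thesis by (simp add: test_fun_def)
qed


locale hyp =
  fixes smul :: "complex \<Rightarrow> 'x::banach \<Rightarrow> 'x" and A :: "('a::euclidean_space \<Rightarrow> complex) \<Rightarrow> 'x \<Rightarrow> 'x"
  assumes X: "complex_banach smul" and A: "hyperoperator smul UNIV A"
begin

lemma smul_add: "smul c (x + y) = smul c x + smul c y"
  using X unfolding complex_banach_def vector_space_def by blast
lemma smul_assoc: "smul a (smul b x) = smul (a*b) x"
  using X unfolding complex_banach_def vector_space_def by blast
lemma smul_real: "smul (of_real r) x = r *\<^sub>R x"
  using X unfolding complex_banach_def by blast
lemma smul_norm: "norm (smul c x) = cmod c * norm x"
  using X unfolding complex_banach_def by blast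

lemma smul_blin: "bounded_linear (smul c)"
proof (rule bounded_linear_intro[where K="cmod c"])
  show "smul c (x + y) = smul c x + smul c y" for x y by (rule smul_add)
  show "smul c (r *\<^sub>R x) = r *\<^sub>R smul c x" for r x
  proof -
    have "smul c (r *\<^sub>R x) = smul c (smul (of_real r) x)" by (simp only: smul_real)
    also have "\<dots> = smul (of_real r) (smul c x)" by (simp only: smul_assoc mult.commute)
    also have "\<dots> = r *\<^sub>R smul c x" by (rule smul_real)
    finally show ?thesis .
  qed
  show "norm (smul c x) \<le> norm x * cmod c" for x by (simp add: smul_norm)
qed

lemma smul_zero: "smul c 0 = 0"
  using linear_0[OF bounded_linear.linear[OF smul_blin]] .

lemma smul_0: "smul 0 x = 0"
  using smul_real[of 0 x] by simp

lemma A_bop: "test_fun \<phi> \<Longrightarrow> bounded_op_on smul UNIV (A \<phi>)"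
  using A[unfolded hyperoperator_def, THEN conjunct2, THEN conjunct2, THEN conjunct1] by simp

lemma A_mult: "test_fun \<phi> \<Longrightarrow> test_fun \<psi> \<Longrightarrow> A (\<lambda>t. \<phi> t * \<psi> t) x = A \<phi> (A \<psi> x)"
  using A[unfolded hyperoperator_def, THEN conjunct2, THEN conjunct2, THEN conjunct2, THEN conjunct2, THEN conjunct2, THEN conjunct2, THEN conjunct1] by simp

lemma A_add: "test_fun \<phi> \<Longrightarrow> test_fun \<psi> \<Longrightarrow> A (\<lambda>t. \<phi> t + \<psi> t) x = A \<phi> x + A \<psi> x"
  using A[unfolded hyperoperator_def, THEN conjunct2, THEN conjunct2, THEN conjunct2, THEN conjunct1] by simp

lemma A_scal: "test_fun \<phi> \<Longrightarrow> A (\<lambda>t. c * \<phi> t) x = smul c (A \<phi> x)"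
  using A[unfolded hyperoperator_def, THEN conjunct2, THEN conjunct2, THEN conjunct2, THEN conjunct2, THEN conjunct1] by simp

lemma A_nondeg: "(\<And>\<phi>. test_fun \<phi> \<Longrightarrow> A \<phi> x = 0) \<Longrightarrow> x = 0"
  using A[unfolded hyperoperator_def, THEN conjunct2, THEN conjunct2, THEN conjunct2, THEN conjunct2, THEN conjunct2, THEN conjunct2, THEN conjunct2, THEN conjunct2] by simp

lemma A_dense: "UNIV \<subseteq> closure (hdom UNIV A)"
  using A[unfolded hyperoperator_def, THEN conjunct2, THEN conjunct2, THEN conjunct2, THEN conjunct2, THEN conjunct2, THEN conjunct2, THEN conjunct2, THEN conjunct1] unfolding hdom_def by simp

lemma A_cont: "D_tendsto_zero \<phi>s \<Longrightarrow> (\<lambda>j. opnorm_on UNIV (A (\<phi>s j))) \<longlonglongrightarrow> 0"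
  using A[unfolded hyperoperator_def, THEN conjunct2, THEN conjunct2, THEN conjunct2, THEN conjunct2, THEN conjunct2, THEN conjunct1] by simp

lemma A_blin: "test_fun \<phi> \<Longrightarrow> bounded_linear (A \<phi>)"
proof -
  assume p: "test_fun \<phi>"
  note b = A_bop[OF p, unfolded bounded_op_on_def]
  obtain K where K: "\<And>x. norm (A \<phi> x) \<le> K * norm x" using b by blast
  show ?thesis
  proof (rule bounded_linear_intro[where K=K])
    show "A \<phi> (x + y) = A \<phi> x + A \<phi> y" for x y using b by blast
    show "A \<phi> (r *\<^sub>R x) = r *\<^sub>R A \<phi> x" for r x
    proof -
      have "A \<phi> (r *\<^sub>R x) = A \<phi> (smul (of_real r) x)" by (simp only: smul_real)
      also have "\<dots> = smul (of_real r) (A \<phi> x)" using b by blast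
      also have "\<dots> = r *\<^sub>R A \<phi> x" by (rule smul_real)
      finally show ?thesis .
    qed
    show "norm (A \<phi> x) \<le> norm x * K" for x using K[of x] by (simp add: mult.commute)
  qed
qed

lemma A_zero: "test_fun \<phi> \<Longrightarrow> A \<phi> 0 = 0"
  using linear_0[OF bounded_linear.linear[OF A_blin]] by blast

lemma A_diff: "test_fun \<phi> \<Longrightarrow> A \<phi> (x - y) = A \<phi> x - A \<phi> y"
  using linear_diff[OF bounded_linear.linear[OF A_blin]] by blast

lemma A_smul: "test_fun \<phi> \<Longrightarrow> A \<phi> (smul c x) = smul c (A \<phi> x)"
  using A_bop[unfolded bounded_op_on_def] by blast

lemma A_plus: "test_fun \<phi> \<Longrightarrow> A \<phi> (x + y) = A \<phi> x + A \<phi> y"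
  using A_bop[unfolded bounded_op_on_def] by blast

lemma A_cont_on: "test_fun \<phi> \<Longrightarrow> continuous_on S (A \<phi>)"
  using linear_continuous_on[OF A_blin] by blast

lemma hdom_iff: "x \<in> hdom UNIV A \<longleftrightarrow> (\<exists>\<phi> y. test_fun \<phi> \<and> x = A \<phi> y)"
  unfolding hdom_def by blast

lemma A_mult_assoc:
  assumes "test_fun \<kappa>" "test_fun \<phi>" "(\<lambda>t. \<kappa> t * \<phi> t) = (\<lambda>t. \<kappa>' t * \<phi>' t)" "test_fun \<kappa>'" "test_fun \<phi>'"
  shows "A \<kappa> (A \<phi> y) = A \<kappa>' (A \<phi>' y)"
proof -
  have "A \<kappa> (A \<phi> y) = A (\<lambda>t. \<kappa> t * \<phi> t) y" by (rule A_mult[OF assms(1,2), symmetric])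
  also have "\<dots> = A (\<lambda>t. \<kappa>' t * \<phi>' t) y" by (simp only: assms(3))
  also have "\<dots> = A \<kappa>' (A \<phi>' y)" by (rule A_mult[OF assms(4,5)])
  finally show ?thesis .
qed

lemma hcalc_eq:
  fixes g :: "'a \<Rightarrow> real"
  assumes p: "test_fun \<phi>" and g: "smooth g"
  shows "hcalc UNIV A g (A \<phi> y) = A (\<lambda>t. complex_of_real (g t) * \<phi> t) y"
proof -
  let ?P = "\<lambda>v. \<exists>\<phi>' y'. test_fun \<phi>' \<and> y' \<in> UNIV \<and> A \<phi> y = A \<phi>' y' \<and> v = A (\<lambda>t. complex_of_real (g t) * \<phi>' t) y'"
  have "?P (A (\<lambda>t. complex_of_real (g t) * \<phi> t) y)" using p by blast
  then have "?P (hcalc UNIV A g (A \<phi> y))" unfolding hcalc_def by (rule someI)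
  then obtain \<phi>' y' where p': "test_fun \<phi>'" "A \<phi> y = A \<phi>' y'"
     and v: "hcalc UNIV A g (A \<phi> y) = A (\<lambda>t. complex_of_real (g t) * \<phi>' t) y'" by blast
  have cg: "smooth (\<lambda>t. complex_of_real (g t))" using smooth_of_real[OF g] .
  have t1: "test_fun (\<lambda>t. complex_of_real (g t) * \<phi> t)" using test_fun_mult[OF p cg] .
  have t2: "test_fun (\<lambda>t. complex_of_real (g t) * \<phi>' t)" using test_fun_mult[OF p'(1) cg] .
  have "A (\<lambda>t. complex_of_real (g t) * \<phi>' t) y' - A (\<lambda>t. complex_of_real (g t) * \<phi> t) y = 0"
  proof (rule A_nondeg)
    fix \<kappa> :: "'a \<Rightarrow> complex" assume c: "test_fun \<kappa>"
    have cg': "test_fun (\<lambda>t. \<kappa> t * complex_of_real (g t))" using test_fun_mult2[OF c cg] .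
    have e1: "A \<kappa> (A (\<lambda>t. complex_of_real (g t) * \<phi> t) y) = A (\<lambda>t. \<kappa> t * complex_of_real (g t)) (A \<phi> y)"
      by (rule A_mult_assoc[OF c t1 _ cg' p]) (simp add: mult.assoc)
    have e2: "A \<kappa> (A (\<lambda>t. complex_of_real (g t) * \<phi>' t) y') = A (\<lambda>t. \<kappa> t * complex_of_real (g t)) (A \<phi>' y')"
      by (rule A_mult_assoc[OF c t2 _ cg' p'(1)]) (simp add: mult.assoc)
    show "A \<kappa> (A (\<lambda>t. complex_of_real (g t) * \<phi>' t) y' - A (\<lambda>t. complex_of_real (g t) * \<phi> t) y) = 0"
      unfolding A_diff[OF c] e1 e2 p'(2) by simp
  qed
  then show ?thesis using v by simp
qed

lemma hcalc_commute:
  fixes g :: "'a \<Rightarrow> real"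
  assumes x: "x \<in> hdom UNIV A" and p: "test_fun \<psi>" and g: "smooth g"
  shows "A \<psi> (hcalc UNIV A g x) = A (\<lambda>t. \<psi> t * complex_of_real (g t)) x"
proof -
  obtain \<kappa> z where c: "test_fun \<kappa>" "x = A \<kappa> z" using x hdom_iff by blast
  have cg: "smooth (\<lambda>t. complex_of_real (g t))" using smooth_of_real[OF g] .
  have t1: "test_fun (\<lambda>t. complex_of_real (g t) * \<kappa> t)" using test_fun_mult[OF c(1) cg] .
  have t2: "test_fun (\<lambda>t. \<psi> t * complex_of_real (g t))" using test_fun_mult2[OF p cg] .
  show ?thesis unfolding c(2) hcalc_eq[OF c(1) g]
    by (rule A_mult_assoc[OF p t1 _ t2 c(1)]) (simp add: mult.assoc)
qed


lemma hdom_bump2: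
  assumes "x1 \<in> hdom UNIV A" "x2 \<in> hdom UNIV A"
  shows "\<exists>\<psi>. test_fun \<psi> \<and> A \<psi> x1 = x1 \<and> A \<psi> x2 = x2"
proof -
  obtain \<phi>1 y1 where p1: "test_fun \<phi>1" "x1 = A \<phi>1 y1" using assms(1) hdom_iff by blast
  obtain \<phi>2 y2 where p2: "test_fun \<phi>2" "x2 = A \<phi>2 y2" using assms(2) hdom_iff by blast
  have K: "compact (tsupport \<phi>1 \<union> tsupport \<phi>2)"
    using test_fun_tsupport[OF p1(1)] test_fun_tsupport[OF p2(1)] by (rule compact_Un)
  obtain \<psi> where ps: "test_fun \<psi>" "\<forall>t\<in>tsupport \<phi>1 \<union> tsupport \<phi>2. \<psi> t = 1"
    using cbump[OF K open_UNIV subset_UNIV] by blast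
  have "A \<psi> x1 = x1"
    unfolding p1(2) A_mult[OF ps(1) p1(1), symmetric] using ps(2) bump_mult[of \<phi>1 \<psi>] by simp
  moreover have "A \<psi> x2 = x2"
    unfolding p2(2) A_mult[OF ps(1) p2(1), symmetric] using ps(2) bump_mult[of \<phi>2 \<psi>] by simp
  ultimately show ?thesis using ps(1) by blast
qed

lemma hdom_zero: "0 \<in> hdom UNIV A"
  unfolding hdom_iff using A_zero[OF test_fun_zero] test_fun_zero by metis

lemma hdom_add: "x1 \<in> hdom UNIV A \<Longrightarrow> x2 \<in> hdom UNIV A \<Longrightarrow> x1 + x2 \<in> hdom UNIV A"
proof -
  assume a: "x1 \<in> hdom UNIV A" "x2 \<in> hdom UNIV A"
  obtain \<psi> where ps: "test_fun \<psi>" "A \<psi> x1 = x1" "A \<psi> x2 = x2" using hdom_bump2[OF a] by blast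
  have "x1 + x2 = A \<psi> (x1 + x2)" using A_plus[OF ps(1)] ps by simp
  then show ?thesis unfolding hdom_iff using ps(1) by blast
qed

lemma hdom_smul: "x \<in> hdom UNIV A \<Longrightarrow> smul c x \<in> hdom UNIV A"
proof -
  assume "x \<in> hdom UNIV A"
  then obtain \<phi> y where p: "test_fun \<phi>" "x = A \<phi> y" using hdom_iff by blast
  have "smul c x = A \<phi> (smul c y)" using A_smul[OF p(1)] p(2) by simp
  then show ?thesis unfolding hdom_iff using p(1) by blast
qed

lemma hcalc_add:
  fixes g :: "'a \<Rightarrow> real"
  assumes g: "smooth g" and a: "x1 \<in> hdom UNIV A" "x2 \<in> hdom UNIV A"
  shows "hcalc UNIV A g (x1 + x2) = hcalc UNIV A g x1 + hcalc UNIV A g x2"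
proof -
  obtain \<psi> where ps: "test_fun \<psi>" "A \<psi> x1 = x1" "A \<psi> x2 = x2" using hdom_bump2[OF a] by blast
  have e: "x1 + x2 = A \<psi> (x1 + x2)" using A_plus[OF ps(1)] ps by simp
  have t: "test_fun (\<lambda>t. complex_of_real (g t) * \<psi> t)" using test_fun_mult[OF ps(1) smooth_of_real[OF g]] .
  have "hcalc UNIV A g (x1 + x2) = A (\<lambda>t. complex_of_real (g t) * \<psi> t) (x1 + x2)"
    by (subst e, rule hcalc_eq[OF ps(1) g])
  also have "\<dots> = A (\<lambda>t. complex_of_real (g t) * \<psi> t) x1 + A (\<lambda>t. complex_of_real (g t) * \<psi> t) x2"
    by (rule A_plus[OF t])
  also have "\<dots> = hcalc UNIV A g x1 + hcalc UNIV A g x2"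
    using hcalc_eq[OF ps(1) g, of x1] hcalc_eq[OF ps(1) g, of x2] ps(2,3) by simp
  finally show ?thesis .
qed

lemma hcalc_smul:
  fixes g :: "'a \<Rightarrow> real"
  assumes g: "smooth g" and a: "x \<in> hdom UNIV A"
  shows "hcalc UNIV A g (smul c x) = smul c (hcalc UNIV A g x)"
proof -
  obtain \<phi> y where p: "test_fun \<phi>" "x = A \<phi> y" using a hdom_iff by blast
  have t: "test_fun (\<lambda>t. complex_of_real (g t) * \<phi> t)" using test_fun_mult[OF p(1) smooth_of_real[OF g]] .
  have e: "smul c x = A \<phi> (smul c y)" using A_smul[OF p(1)] p(2) by simp
  show ?thesis unfolding e unfolding p(2) hcalc_eq[OF p(1) g] A_smul[OF t] ..
qed

lemma hcalc_zero:
  fixes g :: "'a \<Rightarrow> real"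
  assumes g: "smooth g"
  shows "hcalc UNIV A g 0 = 0"
proof -
  have t: "test_fun (\<lambda>t. complex_of_real (g t) * 0)"
    using test_fun_mult[OF test_fun_zero smooth_of_real[OF g]] .
  have "hcalc UNIV A g 0 = hcalc UNIV A g (A (\<lambda>t. 0) 0)" using A_zero[OF test_fun_zero] by simp
  also have "\<dots> = A (\<lambda>t. complex_of_real (g t) * 0) 0" by (rule hcalc_eq[OF test_fun_zero g])
  also have "\<dots> = 0" by (rule A_zero[OF t])
  finally show ?thesis .
qed

definition Xp :: "('a \<Rightarrow> real^'m) \<Rightarrow> 'x set" where
  "Xp f = {x \<in> hdom UNIV A. \<forall>i. hcalc UNIV A (\<lambda>t. f t $ i) x = 0}"

lemma Xp_hdom: "x \<in> Xp f \<Longrightarrow> x \<in> hdom UNIV A"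
  unfolding Xp_def by blast

lemma Xp_zero: "smooth f \<Longrightarrow> 0 \<in> Xp f"
  unfolding Xp_def using hdom_zero hcalc_zero[OF smooth_component] by blast

lemma Xp_add: "smooth f \<Longrightarrow> x1 \<in> Xp f \<Longrightarrow> x2 \<in> Xp f \<Longrightarrow> x1 + x2 \<in> Xp f"
proof -
  assume f: "smooth f" and a: "x1 \<in> Xp f" "x2 \<in> Xp f"
  have h: "x1 \<in> hdom UNIV A" "x2 \<in> hdom UNIV A" using a Xp_hdom by blast+
  have "hcalc UNIV A (\<lambda>t. f t $ i) (x1 + x2) = 0" for i
    using hcalc_add[OF smooth_component[OF f] h, of i] a unfolding Xp_def by simp
  then show ?thesis unfolding Xp_def using hdom_add[OF h] by blast
qed

lemma Xp_smul: "smooth f \<Longrightarrow> x \<in> Xp f \<Longrightarrow> smul c x \<in> Xp f"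
proof -
  assume f: "smooth f" and a: "x \<in> Xp f"
  have h: "x \<in> hdom UNIV A" using a Xp_hdom by blast
  have "hcalc UNIV A (\<lambda>t. f t $ i) (smul c x) = 0" for i
    using hcalc_smul[OF smooth_component[OF f] h, of i c] a smul_zero unfolding Xp_def by simp
  then show ?thesis unfolding Xp_def using hdom_smul[OF h] by blast
qed

lemma A_vanish_Xp:
  assumes f: "smooth f" and p: "test_fun \<phi>" and y: "y \<in> closure (Xp f)"
  shows "A (\<lambda>t. complex_of_real (f t $ i) * \<phi> t) y = 0"
proof -
  let ?g = "\<lambda>t. f t $ i"
  have g: "smooth ?g" using smooth_component[OF f] .
  have t: "test_fun (\<lambda>t. complex_of_real (?g t) * \<phi> t)" using test_fun_mult[OF p smooth_of_real[OF g]] .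
  have "Xp f \<subseteq> {z. A (\<lambda>t. complex_of_real (?g t) * \<phi> t) z = (\<lambda>z. 0) z}"
  proof
    fix z assume z: "z \<in> Xp f"
    have "A (\<lambda>t. complex_of_real (?g t) * \<phi> t) z = A (\<lambda>t. \<phi> t * complex_of_real (?g t)) z"
      by (simp only: mult.commute)
    also have "\<dots> = A \<phi> (hcalc UNIV A ?g z)" using hcalc_commute[OF Xp_hdom[OF z] p g] by simp
    also have "\<dots> = 0" using z A_zero[OF p] unfolding Xp_def by simp
    finally show "z \<in> {z. A (\<lambda>t. complex_of_real (?g t) * \<phi> t) z = (\<lambda>z. 0) z}" by simp
  qed
  moreover have "closed {z. A (\<lambda>t. complex_of_real (?g t) * \<phi> t) z = (\<lambda>z. 0) z}"
    by (rule closed_Collect_eq[OF A_cont_on[OF t] continuous_on_const])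
  ultimately have "closure (Xp f) \<subseteq> {z. A (\<lambda>t. complex_of_real (?g t) * \<phi> t) z = (\<lambda>z. 0) z}"
    by (rule closure_minimal)
  then show ?thesis using y by blast
qed

lemma A_into_Xp:
  assumes f: "smooth f" and p: "test_fun \<phi>" and y: "y \<in> closure (Xp f)"
  shows "A \<phi> y \<in> Xp f"
proof -
  have "A \<phi> y \<in> hdom UNIV A" unfolding hdom_iff using p by blast
  moreover have "hcalc UNIV A (\<lambda>t. f t $ i) (A \<phi> y) = 0" for i
    unfolding hcalc_eq[OF p smooth_component[OF f]] by (rule A_vanish_Xp[OF f p y])
  ultimately show ?thesis unfolding Xp_def by blast
qed

lemma hdom_Y: "smooth f \<Longrightarrow> hdom (closure (Xp f)) A = Xp f"
proof
  assume f: "smooth f"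
  show "hdom (closure (Xp f)) A \<subseteq> Xp f"
    unfolding hdom_def using A_into_Xp[OF f] by blast
  show "Xp f \<subseteq> hdom (closure (Xp f)) A"
  proof
    fix x assume x: "x \<in> Xp f"
    obtain \<psi> where ps: "test_fun \<psi>" "A \<psi> x = x" using hdom_bump2[OF Xp_hdom[OF x] Xp_hdom[OF x]] by blast
    have "x \<in> closure (Xp f)" using x closure_subset by blast
    then show "x \<in> hdom (closure (Xp f)) A" unfolding hdom_def using ps by force
  qed
qed

lemma Xp_hcalc:
  fixes p :: "'a \<Rightarrow> real"
  assumes f: "smooth f" and p: "smooth p" and x: "x \<in> Xp f"
  shows "hcalc UNIV A p x \<in> Xp f"
proof -
  obtain \<phi> y where ph: "test_fun \<phi>" "x = A \<phi> y" using Xp_hdom[OF x] hdom_iff by blast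
  obtain \<psi> where ps: "test_fun \<psi>" "\<forall>t\<in>tsupport \<phi>. \<psi> t = 1"
    using cbump[OF test_fun_tsupport[OF ph(1)] open_UNIV subset_UNIV] by blast
  have pf: "\<And>t. \<psi> t * \<phi> t = \<phi> t" using bump_mult[OF ps(2)] by metis
  have cp: "smooth (\<lambda>t. complex_of_real (p t))" using smooth_of_real[OF p] .
  have t1: "test_fun (\<lambda>t. complex_of_real (p t) * \<phi> t)" using test_fun_mult[OF ph(1) cp] .
  have hx: "hcalc UNIV A p x = A (\<lambda>t. complex_of_real (p t) * \<phi> t) y"
    unfolding ph(2) by (rule hcalc_eq[OF ph(1) p])
  have "hcalc UNIV A (\<lambda>t. f t $ i) (hcalc UNIV A p x) = 0" for i
  proof -
    let ?g = "\<lambda>t. f t $ i"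
    have g: "smooth ?g" using smooth_component[OF f] .
    have cg: "smooth (\<lambda>t. complex_of_real (?g t))" using smooth_of_real[OF g] .
    have t2: "test_fun (\<lambda>t. complex_of_real (p t) * \<psi> t)" using test_fun_mult[OF ps(1) cp] .
    have t3: "test_fun (\<lambda>t. complex_of_real (?g t) * \<phi> t)" using test_fun_mult[OF ph(1) cg] .
    have fe: "(\<lambda>t. complex_of_real (?g t) * (complex_of_real (p t) * \<phi> t))
          = (\<lambda>t. (complex_of_real (p t) * \<psi> t) * (complex_of_real (?g t) * \<phi> t))"
    proof (rule ext)
      fix t
      have "(complex_of_real (p t) * \<psi> t) * (complex_of_real (?g t) * \<phi> t)
         = complex_of_real (?g t) * (complex_of_real (p t) * (\<psi> t * \<phi> t))" by (simp only: ac_simps)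
      then show "complex_of_real (?g t) * (complex_of_real (p t) * \<phi> t)
         = (complex_of_real (p t) * \<psi> t) * (complex_of_real (?g t) * \<phi> t)" by (simp only: pf)
    qed
    have "hcalc UNIV A ?g (hcalc UNIV A p x) = A (\<lambda>t. complex_of_real (?g t) * (complex_of_real (p t) * \<phi> t)) y"
      unfolding hx by (rule hcalc_eq[OF t1 g])
    also have "\<dots> = A (\<lambda>t. complex_of_real (p t) * \<psi> t) (A (\<lambda>t. complex_of_real (?g t) * \<phi> t) y)"
      unfolding fe by (rule A_mult[OF t2 t3])
    also have "A (\<lambda>t. complex_of_real (?g t) * \<phi> t) y = hcalc UNIV A ?g x"
      unfolding ph(2) by (rule hcalc_eq[OF ph(1) g, symmetric])
    also have "\<dots> = 0" using x unfolding Xp_def by blast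
    finally show ?thesis using A_zero[OF t2] by simp
  qed
  moreover have "hcalc UNIV A p x \<in> hdom UNIV A" unfolding hx hdom_iff using t1 by blast
  ultimately show ?thesis unfolding Xp_def by blast
qed


lemma closure_csub: "csubspace smul S \<Longrightarrow> csubspace smul (closure S)"
proof -
  assume S: "csubspace smul S"
  have S0: "0 \<in> S" and Sa: "\<And>x y. x \<in> S \<Longrightarrow> y \<in> S \<Longrightarrow> x + y \<in> S"
    and Ss: "\<And>c x. x \<in> S \<Longrightarrow> smul c x \<in> S" using S unfolding csubspace_def by blast+
  have c1: "x + y \<in> closure S" if x: "x \<in> S" and y: "y \<in> closure S" for x y
  proof -
    have "(\<lambda>y. x + y) ` closure S \<subseteq> closure S"
    proof (rule image_closure_subset)
      show "continuous_on (closure S) (\<lambda>y. x + y)" by (intro continuous_intros)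
      show "(\<lambda>y. x + y) ` S \<subseteq> closure S" using Sa x closure_subset by blast
    qed simp
    then show ?thesis using y by blast
  qed
  have c2: "x + y \<in> closure S" if x: "x \<in> closure S" and y: "y \<in> closure S" for x y
  proof -
    have "(\<lambda>x. x + y) ` closure S \<subseteq> closure S"
    proof (rule image_closure_subset)
      show "continuous_on (closure S) (\<lambda>x. x + y)" by (intro continuous_intros)
      show "(\<lambda>x. x + y) ` S \<subseteq> closure S" using c1 y by blast
    qed simp
    then show ?thesis using x by blast
  qed
  have c3: "smul c x \<in> closure S" if x: "x \<in> closure S" for c x
  proof -
    have "smul c ` closure S \<subseteq> closure S"
    proof (rule image_closure_subset)
      show "continuous_on (closure S) (smul c)" by (rule linear_continuous_on[OF smul_blin])
      show "smul c ` S \<subseteq> closure S" using Ss closure_subset by blast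
    qed simp
    then show ?thesis using x by blast
  qed
  show ?thesis unfolding csubspace_def using c2 c3 S0 closure_subset by blast
qed

lemma Xp_csub: "smooth f \<Longrightarrow> csubspace smul (Xp f)"
  unfolding csubspace_def using Xp_zero Xp_add Xp_smul by blast

lemma opnorm_le:
  assumes T: "bounded_linear T"
  shows "0 \<le> opnorm_on Y T \<and> opnorm_on Y T \<le> opnorm_on UNIV T"
proof -
  obtain K where K: "\<And>x. norm (T x) \<le> norm x * K" "K > 0"
    using bounded_linear.pos_bounded[OF T] by blast
  let ?SY = "{norm (T x) |x. x \<in> Y \<and> norm x \<le> 1} \<union> {0}"
  let ?SU = "{norm (T x) |x. x \<in> UNIV \<and> norm x \<le> 1} \<union> {0}"
  have "bdd_above ?SU"
  proof (rule bdd_aboveI[where M=K])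
    fix r assume "r \<in> ?SU"
    then show "r \<le> K"
    proof
      assume "r \<in> {norm (T x) |x. x \<in> UNIV \<and> norm x \<le> 1}"
      then obtain x where "r = norm (T x)" "norm x \<le> 1" by blast
      moreover have "norm x * K \<le> 1 * K" using \<open>norm x \<le> 1\<close> K(2) by (intro mult_right_mono) auto
      ultimately show "r \<le> K" using K(1)[of x] by simp
    qed (use K(2) in simp)
  qed
  moreover have sub: "?SY \<subseteq> ?SU" by blast
  ultimately have b: "bdd_above ?SY" by (rule bdd_above_mono)
  have "Sup ?SY \<le> Sup ?SU" by (rule cSup_subset_mono) (use sub \<open>bdd_above ?SU\<close> in auto)
  moreover have "0 \<le> Sup ?SY" by (rule cSup_upper) (use b in auto)
  ultimately show ?thesis unfolding opnorm_on_def by simp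
qed

lemma A_vanish_closure:
  assumes p: "test_fun \<phi>" and v: "\<forall>x\<in>S. A \<phi> x = 0" and x: "x \<in> closure S"
  shows "A \<phi> x = 0"
proof -
  have "S \<subseteq> {z. A \<phi> z = (\<lambda>z. 0) z}" using v by auto
  moreover have "closed {z. A \<phi> z = (\<lambda>z. 0) z}"
    by (rule closed_Collect_eq[OF A_cont_on[OF p] continuous_on_const])
  ultimately have "closure S \<subseteq> {z. A \<phi> z = (\<lambda>z. 0) z}" by (rule closure_minimal)
  then show ?thesis using x by blast
qed

lemma hyp_Y:
  assumes f: "smooth f"
  shows "hyperoperator smul (closure (Xp f)) A"
proof -
  let ?Y = "closure (Xp f)"
  have c1: "csubspace smul ?Y" by (rule closure_csub[OF Xp_csub[OF f]])
  have c3: "bounded_op_on smul ?Y (A \<phi>)" if p: "test_fun \<phi>" for \<phi>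
  proof -
    have "A \<phi> ` ?Y \<subseteq> ?Y" using A_into_Xp[OF f p] closure_subset by blast
    moreover obtain K where "\<And>x. norm (A \<phi> x) \<le> norm x * K"
      using bounded_linear.bounded[OF A_blin[OF p]] by blast
    then have "\<forall>x\<in>?Y. norm (A \<phi> x) \<le> K * norm x" by (simp add: mult.commute)
    ultimately show ?thesis unfolding bounded_op_on_def using A_plus[OF p] A_smul[OF p] by blast
  qed
  have c6: "(\<lambda>j. opnorm_on ?Y (A (\<phi>s j))) \<longlonglongrightarrow> 0" if d: "D_tendsto_zero \<phi>s" for \<phi>s
  proof (rule tendsto_sandwich[OF _ _ tendsto_const A_cont[OF d]])
    have t: "test_fun (\<phi>s j)" for j using d unfolding D_tendsto_zero_def by blast
    show "\<forall>\<^sub>F j in sequentially. 0 \<le> opnorm_on ?Y (A (\<phi>s j))"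
      using opnorm_le[OF A_blin[OF t]] by simp
    show "\<forall>\<^sub>F j in sequentially. opnorm_on ?Y (A (\<phi>s j)) \<le> opnorm_on UNIV (A (\<phi>s j))"
      using opnorm_le[OF A_blin[OF t]] by simp
  qed
  have c8: "?Y \<subseteq> closure (\<Union>\<phi>\<in>{\<phi>. test_fun \<phi>}. A \<phi> ` ?Y)"
    using hdom_Y[OF f] unfolding hdom_def by simp
  show ?thesis unfolding hyperoperator_def
    using c1 c3 c6 c8 A_add A_scal A_mult A_nondeg by simp
qed

lemma hsupport_mono: "hsupport Y A \<subseteq> hsupport UNIV A"
  unfolding hsupport_def by blast

lemma hsupport_zero: "hsupport {0} A = {}"
proof -
  have "t \<notin> hsupport {0} A" for t
    unfolding hsupport_def using A_zero by blast
  then show ?thesis by blast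
qed


lemma hsupport_interior:
  assumes f: "smooth f"
  shows "interior (f -` {0}) \<inter> hsupport UNIV A \<subseteq> hsupport (closure (Xp f)) A"
proof
  fix t assume t: "t \<in> interior (f -` {0}) \<inter> hsupport UNIV A"
  show "t \<in> hsupport (closure (Xp f)) A"
    unfolding hsupport_def
  proof (clarify)
    fix U assume U: "open U" "t \<in> U"
      and van: "\<forall>\<phi>. test_fun \<phi> \<and> tsupport \<phi> \<subseteq> U \<longrightarrow> (\<forall>x\<in>closure (Xp f). A \<phi> x = 0)"
    define V where "V = U \<inter> interior (f -` {0})"
    have V: "open V" "t \<in> V" using U t unfolding V_def by auto
    obtain \<phi> x where ph: "test_fun \<phi>" "tsupport \<phi> \<subseteq> V" "A \<phi> x \<noteq> 0"
      using t V unfolding hsupport_def by blast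
    define w where "w = A \<phi> x"
    have "hcalc UNIV A (\<lambda>t. f t $ i) w = 0" for i
    proof -
      have fe: "(\<lambda>t. complex_of_real (f t $ i) * \<phi> t) = (\<lambda>t. 0 * \<phi> t)"
      proof (rule ext)
        fix s show "complex_of_real (f s $ i) * \<phi> s = 0 * \<phi> s"
        proof (cases "\<phi> s = 0")
          case False
          then have "s \<in> V" using ph(2) tsupport_in by blast
          then have "s \<in> f -` {0}" unfolding V_def using interior_subset by blast
          then show ?thesis by simp
        qed simp
      qed
      show ?thesis unfolding w_def hcalc_eq[OF ph(1) smooth_component[OF f]] fe
        A_scal[OF ph(1)] by (rule smul_0)
    qed
    moreover have "w \<in> hdom UNIV A" unfolding w_def hdom_iff using ph(1) by blast
    ultimately have wX: "w \<in> Xp f" unfolding Xp_def by blast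
    obtain \<psi> where ps: "test_fun \<psi>" "tsupport \<psi> \<subseteq> V" "\<forall>s\<in>tsupport \<phi>. \<psi> s = 1"
      using cbump[OF test_fun_tsupport[OF ph(1)] V(1) ph(2)] by blast
    have "A \<psi> w = w"
      unfolding w_def A_mult[OF ps(1) ph(1), symmetric] bump_mult[OF ps(3)] ..
    moreover have "tsupport \<psi> \<subseteq> U" using ps(2) unfolding V_def by blast
    then have "A \<psi> w = 0" using van ps(1) wX closure_subset by blast
    ultimately show False using ph(3) unfolding w_def by simp
  qed
qed

lemma hsupport_zeroset:
  assumes f: "smooth f"
  shows "hsupport (closure (Xp f)) A \<subseteq> f -` {0}"
proof
  fix t0 assume t0: "t0 \<in> hsupport (closure (Xp f)) A"
  show "t0 \<in> f -` {0}"
  proof (rule ccontr)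
    assume "t0 \<notin> f -` {0}"
    then obtain i where i: "f t0 $ i \<noteq> 0" by (metis vec_eq_iff vimage_singleton_eq zero_index)
    define g where "g t = f t $ i" for t
    have g: "smooth g" unfolding g_def by (rule smooth_component[OF f])
    define c where "c = \<bar>g t0\<bar> / 2"
    have c: "c > 0" using i unfolding c_def g_def by simp
    define U where "U = {t. c < \<bar>g t\<bar>}"
    have gc: "continuous_on UNIV g" using g unfolding smooth_sm using sm_cont by blast
    have U: "open U" "t0 \<in> U" unfolding U_def using c
      by (auto intro!: open_Collect_less continuous_intros gc simp: c_def)
    define D where "D s = s * s + hh (c * c - s * s)" for s
    have Dnz: "D s \<noteq> 0" for s
    proof (cases "s = 0")
      case True then show ?thesis using hh_pos[of "c * c"] c by (simp add: D_def)
    next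
      case False
      then have "s * s > 0" using not_real_square_gt_zero[of s] by blast
      then show ?thesis using hh_nonneg[of "c * c - s * s"] by (simp add: D_def)
    qed
    define G where "G s = s * inverse (D s)" for s
    have Gsm: "sm N G" for N
    proof -
      have L: "sm N (\<lambda>s::real. s)" by (rule sm_linear[OF bounded_linear_ident])
      have "sm N (\<lambda>s::real. c * c - s * s)"
        by (rule sm_diff'[OF sm_const sm_mult[OF L L]])
      then have "sm N (\<lambda>s. hh (c * c - s * s))" by (rule sm_comp[OF hh_sm])
      then have "sm N D" unfolding D_def
        by (rule sm_add[OF sm_mult[OF L L]])
      then have "sm N (\<lambda>s. inverse (D s))" using Dnz sm_inverse by blast
      then show ?thesis unfolding G_def by (rule sm_mult[OF L])
    qed
    have Gg: "smooth (\<lambda>t. G (g t))" unfolding smooth_sm using sm_comp[OF Gsm] g[unfolded smooth_sm] by blast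
    have key: "\<forall>\<phi>. test_fun \<phi> \<and> tsupport \<phi> \<subseteq> U \<longrightarrow> (\<forall>x\<in>closure (Xp f). A \<phi> x = 0)"
    proof (intro allI impI ballI, elim conjE)
      fix \<phi> x assume p: "test_fun \<phi>" and sU: "tsupport \<phi> \<subseteq> U" and x: "x \<in> closure (Xp f)"
      let ?\<psi> = "\<lambda>t. \<phi> t * complex_of_real (G (g t))"
      have ps: "test_fun ?\<psi>" using test_fun_mult2[OF p smooth_of_real[OF Gg]] .
      have pe: "\<phi> = (\<lambda>t. ?\<psi> t * complex_of_real (g t))"
      proof (rule ext)
        fix t show "\<phi> t = ?\<psi> t * complex_of_real (g t)"
        proof (cases "\<phi> t = 0")
          case False
          then have "t \<in> U" using sU tsupport_in by blast
          then have gt: "c < \<bar>g t\<bar>" unfolding U_def by simp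
          then have "c * c < g t * g t" using c
            by (metis abs_mult_self_eq abs_of_pos mult_strict_mono' less_imp_le)
          then have "hh (c * c - g t * g t) = 0" by (intro hh_zero) simp
          then have "D (g t) = g t * g t" by (simp add: D_def)
          moreover have "g t \<noteq> 0" using gt c by auto
          ultimately have "G (g t) * g t = 1" unfolding G_def by (simp add: field_simps)
          then have "complex_of_real (G (g t)) * complex_of_real (g t) = 1"
            by (metis of_real_1 of_real_mult)
          then show ?thesis by (simp add: mult.assoc)
        qed simp
      qed
      have "\<forall>z\<in>Xp f. A \<phi> z = 0"
      proof
        fix z assume z: "z \<in> Xp f"
        have "A \<phi> z = A (\<lambda>t. ?\<psi> t * complex_of_real (g t)) z" using pe by simp
        also have "\<dots> = A ?\<psi> (hcalc UNIV A g z)" using hcalc_commute[OF Xp_hdom[OF z] ps g] by simp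
        also have "hcalc UNIV A g z = 0" using z unfolding Xp_def g_def by blast
        finally show "A \<phi> z = 0" using A_zero[OF ps] by simp
      qed
      then show "A \<phi> x = 0" by (rule A_vanish_closure[OF p _ x])
    qed
    have "t0 \<notin> hsupport (closure (Xp f)) A"
      unfolding hsupport_def using U key by blast
    then show False using t0 by blast
  qed
qed

end

theorem proposition9p1:
  fixes smul :: "complex \<Rightarrow> 'x::banach \<Rightarrow> 'x"
    and A :: "(real^'n \<Rightarrow> complex) \<Rightarrow> 'x \<Rightarrow> 'x"
    and f :: "real^'n \<Rightarrow> real^'m"
    and X' Y :: "'x set"
  assumes X: "complex_banach smul"
    and A: "hyperoperator smul UNIV A"
    and f: "smooth f"
    and X'_def: "X' = {x \<in> hdom UNIV A. \<forall>i. hcalc UNIV A (\<lambda>t. f t $ i) x = 0}"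
    and Y_def: "Y = closure X'"
  shows "closed Y \<and> csubspace smul Y
      \<and> (\<forall>j. \<forall>x\<in>X'. hcalc UNIV A (\<lambda>t. t $ j) x \<in> X')
      \<and> (\<forall>\<phi>. test_fun \<phi> \<longrightarrow> A \<phi> ` Y \<subseteq> Y)
      \<and> hyperoperator smul Y A
      \<and> hdom Y A = X'
      \<and> interior (f -` {0}) \<inter> hsupport UNIV A \<subseteq> hsupport Y A
      \<and> hsupport Y A \<subseteq> f -` {0} \<inter> hsupport UNIV A
      \<and> (\<forall>U. open U \<and> U \<subseteq> f -` {0} \<and> U \<inter> hsupport UNIV A \<noteq> {} \<longrightarrow> Y \<noteq> {0})"
proof -
  interpret H: hyp smul A by (rule hyp.intro[OF X A])
  have Xe: "X' = H.Xp f" unfolding X'_def H.Xp_def ..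
  have Ye: "Y = closure (H.Xp f)" unfolding Y_def Xe ..
  have c1: "closed Y" unfolding Ye by simp
  have c2: "csubspace smul Y" unfolding Ye by (rule H.closure_csub[OF H.Xp_csub[OF f]])
  have c3: "\<forall>j. \<forall>x\<in>X'. hcalc UNIV A (\<lambda>t. t $ j) x \<in> X'"
    unfolding Xe using H.Xp_hcalc[OF f smooth_coord] by blast
  have c4: "\<forall>\<phi>. test_fun \<phi> \<longrightarrow> A \<phi> ` Y \<subseteq> Y"
    unfolding Ye using H.A_into_Xp[OF f] closure_subset by blast
  have c5: "hyperoperator smul Y A" unfolding Ye by (rule H.hyp_Y[OF f])
  have c6: "hdom Y A = X'" unfolding Ye Xe by (rule H.hdom_Y[OF f])
  have c7: "interior (f -` {0}) \<inter> hsupport UNIV A \<subseteq> hsupport Y A"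
    unfolding Ye by (rule H.hsupport_interior[OF f])
  have c8: "hsupport Y A \<subseteq> f -` {0} \<inter> hsupport UNIV A"
    unfolding Ye using H.hsupport_zeroset[OF f] H.hsupport_mono by blast
  have c9: "\<forall>U. open U \<and> U \<subseteq> f -` {0} \<and> U \<inter> hsupport UNIV A \<noteq> {} \<longrightarrow> Y \<noteq> {0}"
  proof (intro allI impI notI, elim conjE)
    fix U assume U: "open U" "U \<subseteq> f -` {0}" "U \<inter> hsupport UNIV A \<noteq> {}" and Y0: "Y = {0}"
    have "U \<subseteq> interior (f -` {0})" using U(1,2) by (rule interior_maximal[rotated])
    then have "interior (f -` {0}) \<inter> hsupport UNIV A \<noteq> {}" using U(3) by blast
    then have "hsupport Y A \<noteq> {}" using c7 by blast
    then show False unfolding Y0 using H.hsupport_zero by simp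
  qed
  show ?thesis using c1 c2 c3 c4 c5 c6 c7 c8 c9 by blast
qed

end
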